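(* Let $\mathcal X,\mathcal Y$ be finite, $q:\mathcal X\times\mathcal Y\to\mathbb R$, $P_{X_1}$ a pmf on $\mathcal X$, and $W,V$ conditional pmfs on $\mathcal Y$ given $\mathcal X$. For conditional pmfs $P_{Y\hat Y|X_1}$ (on $\mathcal Y\times\mathcal Y$ given $\mathcal X$) and $P_{X_2|X_1\hat Y}$ (on $\mathcal X$ given $\mathcal X\times\mathcal Y$), let $\mathbb E[q(X_2,Y)]=\sum_{x_1,x_2,y,\hat y}q(x_2,y)P_{X_1}(x_1)P_{Y\hat Y|X_1}(y,\hat y|x_1)P_{X_2|X_1\hat Y}(x_2|\hat y,x_1)$. Let $\mathcal A$ be the set of $P_{Y\hat Y|X_1}$ with $P_{Y|X_1}=W$ and $P_{\hat Y|X_1}=V$, and $\mathcal B$ the set of $P_{X_2|X_1\hat Y}$ such that, under the joint law $P_{X_1}(x_1)V(\hat y|x_1)P_{X_2|X_1\hat Y}(x_2|\hat y,x_1)$, $P_{\hat YX_2}=P_{\hat YX_1}$. Then $$\max_{P_{Y\hat Y|X_1}\in\mathcal A}\ \min_{P_{X_2|X_1\hat Y}\in\mathcal B}\mathbb E[q(X_2,Y)]=\min_{P_{X_2|X_1\hat Y}\in\mathcal B}\ \max_{P_{Y\hat Y|X_1}\in\mathcal A}\mathbb E[q(X_2,Y)].$$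
   Context: $P_{Y|X_1}$ and $P_{\hat Y|X_1}$ denote the two marginal conditionals of $P_{Y\hat Y|X_1}$. The joint law of $(X_1,Y,\hat Y,X_2)$ is $P_{X_1}P_{Y\hat Y|X_1}P_{X_2|X_1\hat Y}$, so that $X_2-(X_1,\hat Y)-Y$ is a Markov chain. *)

theory Defs
  imports "HOL-Analysis.Analysis"
begin

definition is_pmf :: "('a::finite \<Rightarrow> real) \<Rightarrow> bool" where
  "is_pmf p \<longleftrightarrow> (\<forall>a. 0 \<le> p a) \<and> (\<Sum>a\<in>UNIV. p a) = 1"

(* A conditional pmf: K c is a pmf for every conditioning value c. K c a = K(a|c). *)
definition is_cond_pmf :: "('c \<Rightarrow> 'a::finite \<Rightarrow> real) \<Rightarrow> bool" where
  "is_cond_pmf K \<longleftrightarrow> (\<forall>c. is_pmf (K c))"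

(* E[q(X2,Y)] with X1 ~ P1, (Y,Yhat)|X1 ~ PYY, X2|(X1,Yhat) ~ PX2.
   PYY x1 y yh = P(y,yh|x1);  PX2 x1 yh x2 = P(x2|yh,x1). *)
definition expq ::
  "('x::finite \<Rightarrow> 'y::finite \<Rightarrow> real) \<Rightarrow> ('x \<Rightarrow> real)
   \<Rightarrow> ('x \<Rightarrow> 'y \<Rightarrow> 'y \<Rightarrow> real) \<Rightarrow> ('x \<Rightarrow> 'y \<Rightarrow> 'x \<Rightarrow> real) \<Rightarrow> real" where
  "expq q P1 PYY PX2 =
     (\<Sum>x1\<in>UNIV. \<Sum>x2\<in>UNIV. \<Sum>y\<in>UNIV. \<Sum>yh\<in>UNIV.
        q x2 y * P1 x1 * PYY x1 y yh * PX2 x1 yh x2)"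

(* The set A: couplings of W and V given X1. W x y = W(y|x), V x yh = V(yh|x). *)
definition setA ::
  "('x::finite \<Rightarrow> 'y::finite \<Rightarrow> real) \<Rightarrow> ('x \<Rightarrow> 'y \<Rightarrow> real)
   \<Rightarrow> ('x \<Rightarrow> 'y \<Rightarrow> 'y \<Rightarrow> real) set" where
  "setA W V = {PYY. is_cond_pmf (\<lambda>x1 (y, yh). PYY x1 y yh) \<and>
                    (\<forall>x1 y. (\<Sum>yh\<in>UNIV. PYY x1 y yh) = W x1 y) \<and>
                    (\<forall>x1 yh. (\<Sum>y\<in>UNIV. PYY x1 y yh) = V x1 yh)}"

definition setB ::
  "('x::finite \<Rightarrow> real) \<Rightarrow> ('x \<Rightarrow> 'y::finite \<Rightarrow> real)
   \<Rightarrow> ('x \<Rightarrow> 'y \<Rightarrow> 'x \<Rightarrow> real) set" where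
  "setB P1 V = {PX2. is_cond_pmf (\<lambda>(x1, yh). PX2 x1 yh) \<and>
                    (\<forall>yh x. (\<Sum>x1\<in>UNIV. P1 x1 * V x1 yh * PX2 x1 yh x) = P1 x * V x yh)}"

end

theory Submission
  imports Defs
begin


lemma pos_part_sq:
  fixes x h :: real
  shows "(max 0 (x+h))^2 \<le> (max 0 x)^2 + 2*(max 0 x)*h + h^2"
proof (cases "x + h \<le> 0")
  case True
  have "0 \<le> (max 0 x + h)^2" by simp
  then show ?thesis using True by (simp add: power2_eq_square algebra_simps)
next
  case False
  show ?thesis
  proof (cases "0 \<le> x")
    case True
    then show ?thesis using False by (simp add: power2_eq_square algebra_simps)
  next
    case f2: False
    have "(x+h)^2 \<le> h^2" using False f2
      by (intro power_mono) auto
    then show ?thesis using False f2 by simp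
  qed
qed

lemma core:
  fixes f :: "'a \<Rightarrow> 'b::topological_space \<Rightarrow> real"
  assumes K2: "compact K2" "K2 \<noteq> {}"
  and contB: "\<And>a. a\<in>K1 \<Longrightarrow> continuous_on K2 (f a)"
  and mixA: "\<And>F w. finite F \<Longrightarrow> F \<subseteq> K1 \<Longrightarrow> (\<And>i. i\<in>F \<Longrightarrow> 0 \<le> w i) \<Longrightarrow> sum w F = 1
      \<Longrightarrow> \<exists>a\<in>K1. \<forall>g\<in>K2. f a g = (\<Sum>i\<in>F. w i * f i g)"
  and mixB: "\<And>g0 g t. g0\<in>K2 \<Longrightarrow> g\<in>K2 \<Longrightarrow> 0\<le>t \<Longrightarrow> t\<le>1
      \<Longrightarrow> \<exists>g'\<in>K2. \<forall>a\<in>K1. f a g' = (1-t) * f a g0 + t * f a g"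
  and cover: "\<And>g. g\<in>K2 \<Longrightarrow> \<exists>a\<in>K1. c < f a g"
  shows "\<exists>a\<in>K1. \<forall>g\<in>K2. c < f a g"
proof -
  have "\<exists>U. open U \<and> U \<inter> K2 = f a -` {c<..} \<inter> K2" if "a \<in> K1" for a
    using contB[OF that] unfolding continuous_on_open_invariant by auto
  then obtain U where U: "\<And>a. a\<in>K1 \<Longrightarrow> open (U a) \<and> U a \<inter> K2 = f a -` {c<..} \<inter> K2"
    by metis
  have "K2 \<subseteq> (\<Union>a\<in>K1. U a)" using cover U by blast
  then obtain F where F: "F \<subseteq> K1" "finite F" "K2 \<subseteq> (\<Union>a\<in>F. U a)"
    using compactE_image[OF K2(1), of K1 U] U by blast
  have Fcov: "\<exists>a\<in>F. c < f a g" if gK: "g\<in>K2" for g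
  proof -
    obtain a where "a \<in> F" "g \<in> U a" using F gK by blast
    then show ?thesis using U[of a] F gK by blast
  qed
  define \<phi> where "\<phi> g = (\<Sum>a\<in>F. (max 0 (f a g - c))^2)" for g
  have "continuous_on K2 \<phi>" unfolding \<phi>_def using contB F(1)
    by (intro continuous_intros) auto
  then obtain g0 where g0: "g0 \<in> K2" "\<And>g. g\<in>K2 \<Longrightarrow> \<phi> g0 \<le> \<phi> g"
    using continuous_attains_inf[OF K2] by blast
  define w where "w a = max 0 (f a g0 - c)" for a
  have key: "0 \<le> (\<Sum>a\<in>F. w a * (f a g - f a g0))" if g: "g\<in>K2" for g
  proof (rule ccontr)
    define D where "D = (\<Sum>a\<in>F. w a * (f a g - f a g0))"
    define Q where "Q = (\<Sum>a\<in>F. (f a g - f a g0)^2)"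
    assume "\<not> 0 \<le> (\<Sum>a\<in>F. w a * (f a g - f a g0))"
    then have D: "D < 0" unfolding D_def by simp
    have Q: "0 \<le> Q" unfolding Q_def by (intro sum_nonneg) auto
    define t where "t = min 1 (-D/(Q+1))"
    have t0: "0 < t" using D Q unfolding t_def by (auto simp: divide_neg_pos)
    have t1: "t \<le> 1" unfolding t_def by auto
    obtain g' where g': "g' \<in> K2" "\<And>a. a\<in>K1 \<Longrightarrow> f a g' = (1-t) * f a g0 + t * f a g"
      using mixB[OF g0(1) g, of t] t0 t1 by auto
    have "\<phi> g' = (\<Sum>a\<in>F. (max 0 ((f a g0 - c) + t * (f a g - f a g0)))^2)"
      unfolding \<phi>_def
    proof (intro sum.cong refl)
      fix a assume "a \<in> F"
      then have "f a g' = (1-t) * f a g0 + t * f a g" using g'(2) F(1) by blast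
      then show "(max 0 (f a g' - c))^2 = (max 0 ((f a g0 - c) + t * (f a g - f a g0)))^2"
        by (simp add: algebra_simps)
    qed
    also have "\<dots> \<le> (\<Sum>a\<in>F. (w a)^2 + 2 * w a * (t * (f a g - f a g0)) + (t * (f a g - f a g0))^2)"
      unfolding w_def by (intro sum_mono pos_part_sq)
    also have "\<dots> = (\<Sum>a\<in>F. (w a)^2 + (2*t) * (w a * (f a g - f a g0)) + t^2 * (f a g - f a g0)^2)"
      by (intro sum.cong refl) (simp add: power2_eq_square; algebra)
    also have "\<dots> = \<phi> g0 + 2*t*D + t^2 * Q"
      unfolding \<phi>_def D_def Q_def w_def
      by (simp add: sum.distrib sum_distrib_left)
    finally have 1: "\<phi> g' \<le> \<phi> g0 + 2*t*D + t^2 * Q" .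
    have "t * Q \<le> -D/(Q+1) * Q" using Q t_def by (intro mult_right_mono) auto
    also have "\<dots> \<le> -D" using D Q by (simp add: field_simps)
    finally have "t*Q \<le> -D" .
    then have "t * (t * Q) \<le> t * (-D)" using t0
      by (intro mult_left_mono) auto
    then have 2: "t^2 * Q \<le> t * (-D)" by (simp add: power2_eq_square mult.assoc)
    have 3: "t * D < 0" using t0 D by (simp add: mult_pos_neg)
    have "\<phi> g' < \<phi> g0" using 1 2 3 by linarith
    then show False using g0(2)[OF g'(1)] by simp
  qed
  obtain a1 where a1: "a1 \<in> F" "c < f a1 g0" using Fcov[OF g0(1)] by blast
  have w0: "\<And>a. 0 \<le> w a" unfolding w_def by simp
  have wa1: "0 < w a1" using a1 unfolding w_def by simp
  have Sw: "0 < sum w F"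
    using a1 wa1 w0 F(2) by (intro sum_pos2[of F a1]) auto
  have Sw2: "0 < (\<Sum>a\<in>F. (w a)^2)"
    using a1 wa1 w0 F(2) by (intro sum_pos2[of F a1]) auto
  define lam where "lam a = w a / sum w F" for a
  have "sum lam F = 1" unfolding lam_def using Sw by (simp add: sum_divide_distrib[symmetric])
  then obtain as where as: "as \<in> K1" "\<And>g. g\<in>K2 \<Longrightarrow> f as g = (\<Sum>i\<in>F. lam i * f i g)"
    using mixA[OF F(2) F(1), of lam] w0 Sw unfolding lam_def by auto
  have wg0: "w a * f a g0 = w a * c + (w a)^2" for a
    unfolding w_def by (auto simp: power2_eq_square algebra_simps max_def)
  show ?thesis
  proof (intro bexI[OF _ as(1)] ballI)
    fix g assume g: "g \<in> K2"
    have "c * sum w F < c * sum w F + (\<Sum>a\<in>F. (w a)^2)" using Sw2 by simp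
    also have "\<dots> = (\<Sum>a\<in>F. w a * f a g0)"
      by (simp add: wg0 sum.distrib sum_distrib_left mult.commute)
    also have "\<dots> \<le> (\<Sum>a\<in>F. w a * f a g)"
      using key[OF g] by (simp add: algebra_simps sum_subtractf)
    finally have "c * sum w F < (\<Sum>a\<in>F. w a * f a g)" .
    then have "c < (\<Sum>a\<in>F. w a * f a g) / sum w F" using Sw by (simp add: field_simps)
    also have "\<dots> = f as g" unfolding as(2)[OF g] lam_def
      by (simp add: sum_divide_distrib)
    finally show "c < f as g" .
  qed
qed


lemma strong:
  fixes f :: "'a::t2_space \<Rightarrow> 'b::topological_space \<Rightarrow> real"
  assumes K1: "compact K1" "K1 \<noteq> {}"
  and K2: "compact K2" "K2 \<noteq> {}"
  and contA: "\<And>g. g\<in>K2 \<Longrightarrow> continuous_on K1 (\<lambda>a. f a g)"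
  and contB: "\<And>a. a\<in>K1 \<Longrightarrow> continuous_on K2 (f a)"
  and mixA: "\<And>F w. finite F \<Longrightarrow> F \<subseteq> K1 \<Longrightarrow> (\<And>i. i\<in>F \<Longrightarrow> 0 \<le> w i) \<Longrightarrow> sum w F = 1
      \<Longrightarrow> \<exists>a\<in>K1. \<forall>g\<in>K2. f a g = (\<Sum>i\<in>F. w i * f i g)"
  and mixB: "\<And>g0 g t. g0\<in>K2 \<Longrightarrow> g\<in>K2 \<Longrightarrow> 0\<le>t \<Longrightarrow> t\<le>1
      \<Longrightarrow> \<exists>g'\<in>K2. \<forall>a\<in>K1. f a g' = (1-t) * f a g0 + t * f a g"
  and cov: "\<And>c g. c < v \<Longrightarrow> g\<in>K2 \<Longrightarrow> \<exists>a\<in>K1. c < f a g"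
  shows "\<exists>a\<in>K1. \<forall>g\<in>K2. v \<le> f a g"
proof -
  define S where "S c = K1 \<inter> (\<Inter>g\<in>K2. K1 \<inter> (\<lambda>a. f a g) -` {c..})" for c
  have clK1: "closed K1" using K1(1) by (rule compact_imp_closed)
  have cl: "closed (S c)" for c
    unfolding S_def using clK1
    by (intro closed_Int closed_INT ballI continuous_closed_preimage contA) auto
  have ne: "S c \<noteq> {}" if cv: "c < v" for c
  proof -
    obtain a where "a \<in> K1" "\<forall>g\<in>K2. c < f a g"
      using core[OF K2 contB mixA mixB, of c] cov[OF cv] by blast
    then have "a \<in> S c" unfolding S_def by auto
    then show ?thesis by blast
  qed
  have mono: "S c' \<subseteq> S c" if "c \<le> c'" for c c'
    using that unfolding S_def by auto
  have "K1 \<inter> (\<Inter>c\<in>{..<v}. S c) \<noteq> {}"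
  proof (rule compact_imp_fip_image[OF K1(1)])
    show "closed (S c)" for c by (rule cl)
    fix I' assume I': "finite I'" "I' \<subseteq> {..<v}"
    show "K1 \<inter> (\<Inter>c\<in>I'. S c) \<noteq> {}"
    proof (cases "I' = {}")
      case True then show ?thesis using K1(2) by simp
    next
      case False
      define m where "m = Max I'"
      have m: "m \<in> I'" using False I'(1) unfolding m_def by simp
      have "S m \<subseteq> S c" if "c \<in> I'" for c
        using mono[of c m] I'(1) that unfolding m_def by simp
      moreover have "S m \<subseteq> K1" unfolding S_def by auto
      ultimately have "S m \<subseteq> K1 \<inter> (\<Inter>c\<in>I'. S c)" by blast
      moreover have "S m \<noteq> {}" using ne m I'(2) by auto
      ultimately show ?thesis by blast
    qed
  qed
  then obtain a where a: "a \<in> K1" "\<And>c. c < v \<Longrightarrow> a \<in> S c" by blast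
  show ?thesis
  proof (intro bexI[OF _ a(1)] ballI)
    fix g assume g: "g \<in> K2"
    show "v \<le> f a g"
    proof (rule dense_le)
      fix c assume "c < v"
      then show "c \<le> f a g" using a(2)[of c] g unfolding S_def by (auto split: if_splits)
    qed
  qed
qed


lemma fin2:
  fixes f :: "'a \<Rightarrow> 'b \<Rightarrow> real"
  assumes mix: "\<And>F w. finite F \<Longrightarrow> F \<subseteq> K1 \<Longrightarrow> (\<And>i. i\<in>F \<Longrightarrow> 0 \<le> w i) \<Longrightarrow> sum w F = 1
      \<Longrightarrow> \<exists>a\<in>K1. \<forall>g\<in>K2. f a g = (\<Sum>i\<in>F. w i * f i g)"
  and a: "a0 \<in> K1" "a1 \<in> K1" "0 \<le> t" "t \<le> 1"
  shows "\<exists>a\<in>K1. \<forall>g\<in>K2. f a g = (1-t) * f a0 g + t * f a1 g"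
proof (cases "a0 = a1")
  case True
  obtain a where "a \<in> K1" "\<forall>g\<in>K2. f a g = (\<Sum>i\<in>{a0}. (\<lambda>_. 1::real) i * f i g)"
    using mix[of "{a0}" "\<lambda>_. 1"] a by auto
  then show ?thesis using True by (auto simp: algebra_simps)
next
  case False
  have "\<exists>a\<in>K1. \<forall>g\<in>K2. f a g = (\<Sum>i\<in>{a0,a1}. (\<lambda>i. if i = a0 then 1-t else t) i * f i g)"
    by (rule mix) (use a False in auto)
  then show ?thesis using False by auto
qed

lemma minimax_abs:
  fixes f :: "'a::t2_space \<Rightarrow> 'b::t2_space \<Rightarrow> real"
  assumes K1: "compact K1" "K1 \<noteq> {}"
  and K2: "compact K2" "K2 \<noteq> {}"
  and contA: "\<And>g. g\<in>K2 \<Longrightarrow> continuous_on K1 (\<lambda>a. f a g)"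
  and contB: "\<And>a. a\<in>K1 \<Longrightarrow> continuous_on K2 (f a)"
  and mixA: "\<And>F w. finite F \<Longrightarrow> F \<subseteq> K1 \<Longrightarrow> (\<And>i. i\<in>F \<Longrightarrow> 0 \<le> w i) \<Longrightarrow> sum w F = 1
      \<Longrightarrow> \<exists>a\<in>K1. \<forall>g\<in>K2. f a g = (\<Sum>i\<in>F. w i * f i g)"
  and mixB: "\<And>F w. finite F \<Longrightarrow> F \<subseteq> K2 \<Longrightarrow> (\<And>i. i\<in>F \<Longrightarrow> 0 \<le> w i) \<Longrightarrow> sum w F = 1
      \<Longrightarrow> \<exists>g\<in>K2. \<forall>a\<in>K1. f a g = (\<Sum>i\<in>F. w i * f a i)"
  shows "(\<forall>a\<in>K1. \<exists>b\<in>K2. f a b = (INF b'\<in>K2. f a b'))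
       \<and> (\<forall>b\<in>K2. \<exists>a\<in>K1. f a b = (SUP a'\<in>K1. f a' b))
       \<and> (\<exists>a\<in>K1. (INF b\<in>K2. f a b) = (SUP a'\<in>K1. INF b\<in>K2. f a' b))
       \<and> (\<exists>b\<in>K2. (SUP a\<in>K1. f a b) = (INF b'\<in>K2. SUP a\<in>K1. f a b'))
       \<and> (SUP a\<in>K1. INF b\<in>K2. f a b) = (INF b\<in>K2. SUP a\<in>K1. f a b)"
proof -
  have mixB2: "\<exists>g'\<in>K2. \<forall>a\<in>K1. f a g' = (1-t) * f a g0 + t * f a g"
    if "g0\<in>K2" "g\<in>K2" "0\<le>t" "t\<le>1" for g0 g t
    using fin2[of K2 K1 "\<lambda>g a. f a g", OF mixB] that by blast
  have mixA2: "\<exists>a'\<in>K1. \<forall>g\<in>K2. f a' g = (1-t) * f a0 g + t * f a1 g"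
    if "a0\<in>K1" "a1\<in>K1" "0\<le>t" "t\<le>1" for a0 a1 t
    using fin2[of K1 K2 f, OF mixA] that by blast
  have "\<exists>b\<in>K2. \<forall>b'\<in>K2. f a b \<le> f a b'" if "a \<in> K1" for a
    using continuous_attains_inf[OF K2 contB[OF that]] by blast
  then obtain bm where bm: "\<And>a. a\<in>K1 \<Longrightarrow> bm a \<in> K2 \<and> (\<forall>b'\<in>K2. f a (bm a) \<le> f a b')"
    by metis
  have "\<exists>a\<in>K1. \<forall>a'\<in>K1. f a' b \<le> f a b" if "b \<in> K2" for b
    using continuous_attains_sup[OF K1 contA[OF that]] by blast
  then obtain am where am: "\<And>b. b\<in>K2 \<Longrightarrow> am b \<in> K1 \<and> (\<forall>a'\<in>K1. f a' b \<le> f (am b) b)"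
    by metis
  define \<phi> where "\<phi> a = f a (bm a)" for a
  define \<psi> where "\<psi> b = f (am b) b" for b
  have phi_eq: "(INF b\<in>K2. f a b) = \<phi> a" if "a \<in> K1" for a
    unfolding \<phi>_def using bm[OF that] by (intro cInf_eq_minimum) auto
  have psi_eq: "(SUP a\<in>K1. f a b) = \<psi> b" if "b \<in> K2" for b
    unfolding \<psi>_def using am[OF that] by (intro cSup_eq_maximum) auto
  have phi_psi: "\<phi> a \<le> \<psi> b" if "a \<in> K1" "b \<in> K2" for a b
  proof -
    have "\<phi> a \<le> f a b" unfolding \<phi>_def using bm that by blast
    also have "\<dots> \<le> \<psi> b" unfolding \<psi>_def using am that by blast
    finally show ?thesis .
  qed
  define v where "v = Inf (\<psi> ` K2)"
  have INFv: "(INF b\<in>K2. SUP a\<in>K1. f a b) = v"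
    unfolding v_def using psi_eq by (intro INF_cong) auto
  obtain a0 where a0: "a0 \<in> K1" using K1(2) by blast
  have bdd: "bdd_below (\<psi> ` K2)" unfolding bdd_below_def
    using phi_psi[OF a0] by (intro exI[of _ "\<phi> a0"]) auto
  have vle: "v \<le> \<psi> b" if "b \<in> K2" for b
    unfolding v_def using bdd that by (intro cInf_lower) auto
  have "\<exists>a\<in>K1. \<forall>g\<in>K2. v \<le> f a g"
  proof (rule strong[OF K1 K2 contA contB mixA mixB2])
    fix c g assume "c < v" "g \<in> K2"
    then show "\<exists>a\<in>K1. c < f a g" using am[of g] vle[of g] unfolding \<psi>_def by force
  qed auto
  then obtain as where as: "as \<in> K1" "\<And>g. g\<in>K2 \<Longrightarrow> v \<le> f as g" by blast
  have phi_le: "\<phi> a \<le> v" if "a \<in> K1" for a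
    unfolding v_def using K2(2) phi_psi[OF that] by (intro cInf_greatest) auto
  have phi_as: "\<phi> as = v" using phi_le[OF as(1)] as(2)[of "bm as"] bm[OF as(1)]
    unfolding \<phi>_def by auto
  have SUPv: "(SUP a\<in>K1. INF b\<in>K2. f a b) = v"
  proof -
    have "(SUP a\<in>K1. INF b\<in>K2. f a b) = Sup (\<phi> ` K1)"
      using phi_eq by (intro SUP_cong) auto
    also have "\<dots> = v" using phi_as as(1) phi_le by (intro cSup_eq_maximum) auto
    finally show ?thesis .
  qed
  have "\<exists>b\<in>K2. \<forall>a\<in>K1. - v \<le> - f a b"
  proof (rule strong[of K2 K1 "\<lambda>b a. - f a b"])
    show "compact K2" "K2 \<noteq> {}" "compact K1" "K1 \<noteq> {}" using K1 K2 by auto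
    show "continuous_on K2 (\<lambda>b. - f a b)" if "a \<in> K1" for a
      using contB[OF that] by (intro continuous_intros)
    show "continuous_on K1 (\<lambda>a. - f a b)" if "b \<in> K2" for b
      using contA[OF that] by (intro continuous_intros)
    show "\<exists>b\<in>K2. \<forall>a\<in>K1. - f a b = (\<Sum>i\<in>F. w i * - f a i)"
      if "finite F" "F \<subseteq> K2" "\<And>i. i\<in>F \<Longrightarrow> 0 \<le> w i" "sum w F = 1" for F w
      using mixB[OF that] by (auto simp: sum_negf)
    show "\<exists>a'\<in>K1. \<forall>b\<in>K2. - f a' b = (1-t) * (- f a0 b) + t * (- f a1 b)"
      if hh: "a0\<in>K1" "a1\<in>K1" "0\<le>t" "t\<le>1" for a0 a1 t
    proof -
      obtain a' where "a' \<in> K1" "\<forall>g\<in>K2. f a' g = (1-t) * f a0 g + t * f a1 g"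
        using mixA2[OF hh] by blast
      then show ?thesis by (intro bexI[of _ a']) (auto simp: algebra_simps)
    qed
    fix c a assume "c < - v" "a \<in> K1"
    then show "\<exists>b\<in>K2. c < - f a b" using bm[of a] phi_le[of a] unfolding \<phi>_def by force
  qed
  then obtain bs where bs: "bs \<in> K2" "\<And>a. a\<in>K1 \<Longrightarrow> f a bs \<le> v" by auto
  have psi_bs: "\<psi> bs = v" using vle[OF bs(1)] bs(2)[of "am bs"] am[OF bs(1)]
    unfolding \<psi>_def by auto
  show ?thesis
  proof (intro conjI)
    show "\<forall>a\<in>K1. \<exists>b\<in>K2. f a b = (INF b'\<in>K2. f a b')"
      using bm phi_eq unfolding \<phi>_def by metis
    show "\<forall>b\<in>K2. \<exists>a\<in>K1. f a b = (SUP a'\<in>K1. f a' b)"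
      using am psi_eq unfolding \<psi>_def by metis
    show "\<exists>a\<in>K1. (INF b\<in>K2. f a b) = (SUP a'\<in>K1. INF b\<in>K2. f a' b)"
      using as(1) phi_eq[OF as(1)] phi_as SUPv by auto
    show "\<exists>b\<in>K2. (SUP a\<in>K1. f a b) = (INF b'\<in>K2. SUP a\<in>K1. f a b')"
      using bs(1) psi_eq[OF bs(1)] psi_bs INFv by auto
    show "(SUP a\<in>K1. INF b\<in>K2. f a b) = (INF b\<in>K2. SUP a\<in>K1. f a b)"
      using SUPv INFv by simp
  qed
qed

lemma c3: "continuous_on S (\<lambda>a::'i \<Rightarrow> 'j \<Rightarrow> 'k \<Rightarrow> 'b::topological_space. a i j k)"
proof -
  have "continuous_on S (\<lambda>a::'i \<Rightarrow> 'j \<Rightarrow> 'k \<Rightarrow> 'b. a)" by (rule continuous_on_id)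
  then have "continuous_on S (\<lambda>a::'i \<Rightarrow> 'j \<Rightarrow> 'k \<Rightarrow> 'b. a i)" by (rule continuous_on_product_then_coordinatewise)
  then have "continuous_on S (\<lambda>a::'i \<Rightarrow> 'j \<Rightarrow> 'k \<Rightarrow> 'b. a i j)" by (rule continuous_on_product_then_coordinatewise)
  then show ?thesis by (rule continuous_on_product_then_coordinatewise)
qed

lemma compact_PiE_UNIV:
  fixes S :: "'a \<Rightarrow> 'b::topological_space set"
  assumes "\<And>i. compact (S i)"
  shows "compact (PiE UNIV S)"
proof -
  have "compactin (product_topology (\<lambda>_. euclidean) UNIV) (PiE UNIV S)"
    using assms by (simp add: compactin_PiE compactin_euclidean_iff)
  then show ?thesis by (simp add: euclidean_product_topology compactin_euclidean_iff)
qed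

lemma setA_eq: "setA W V = {a. (\<forall>x1 y yh. 0 \<le> a x1 y yh) \<and> (\<forall>x1. (\<Sum>p\<in>UNIV. a x1 (fst p) (snd p)) = 1)
   \<and> (\<forall>x1 y. (\<Sum>yh\<in>UNIV. a x1 y yh) = W x1 y) \<and> (\<forall>x1 yh. (\<Sum>y\<in>UNIV. a x1 y yh) = V x1 yh)}"
  by (auto simp: setA_def is_cond_pmf_def is_pmf_def split_beta)

lemma setB_eq: "setB P1 V = {b. (\<forall>x1 yh x2. 0 \<le> b x1 yh x2) \<and> (\<forall>x1 yh. (\<Sum>x2\<in>UNIV. b x1 yh x2) = 1)
   \<and> (\<forall>yh x. (\<Sum>x1\<in>UNIV. P1 x1 * V x1 yh * b x1 yh x) = P1 x * V x yh)}"
  by (auto simp: setB_def is_cond_pmf_def is_pmf_def split_beta)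

lemma closed_setA: "closed (setA W V)"
  unfolding setA_eq
  by (intro closed_Collect_conj closed_Collect_all closed_Collect_le closed_Collect_eq continuous_intros c3)

lemma closed_setB: "closed (setB P1 V)"
  unfolding setB_eq
  by (intro closed_Collect_conj closed_Collect_all closed_Collect_le closed_Collect_eq continuous_intros c3)

lemma compact_setA: "compact (setA W V)"
proof -
  define Bx where "Bx = PiE UNIV (\<lambda>_::'a. PiE UNIV (\<lambda>_::'b. PiE UNIV (\<lambda>_::'b. {0..1::real})))"
  have "compact Bx" unfolding Bx_def by (intro compact_PiE_UNIV compact_Icc)
  moreover have "setA W V \<subseteq> Bx"
  proof
    fix a assume a: "a \<in> setA W V"
    have "a x1 y yh \<le> 1" for x1 y yh
    proof -
      have "a x1 (fst (y,yh)) (snd (y,yh)) \<le> (\<Sum>p\<in>UNIV. a x1 (fst p) (snd p))"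
        using a unfolding setA_eq by (intro member_le_sum) auto
      then show ?thesis using a unfolding setA_eq by auto
    qed
    then show "a \<in> Bx" using a unfolding Bx_def setA_eq by (auto simp: PiE_UNIV_domain)
  qed
  ultimately have "compact (Bx \<inter> setA W V)" using closed_setA by blast
  then show ?thesis using \<open>setA W V \<subseteq> Bx\<close> by (simp add: Int_absorb1)
qed

lemma compact_setB: "compact (setB P1 V)"
proof -
  define Bx where "Bx = PiE UNIV (\<lambda>_::'a. PiE UNIV (\<lambda>_::'b. PiE UNIV (\<lambda>_::'a. {0..1::real})))"
  have "compact Bx" unfolding Bx_def by (intro compact_PiE_UNIV compact_Icc)
  moreover have "setB P1 V \<subseteq> Bx"
  proof
    fix b assume b: "b \<in> setB P1 V"
    have "b x1 yh x2 \<le> 1" for x1 yh x2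
    proof -
      have "b x1 yh x2 \<le> (\<Sum>x\<in>UNIV. b x1 yh x)"
        using b unfolding setB_eq by (intro member_le_sum) auto
      then show ?thesis using b unfolding setB_eq by auto
    qed
    then show "b \<in> Bx" using b unfolding Bx_def setB_eq by (auto simp: PiE_UNIV_domain)
  qed
  ultimately have "compact (Bx \<inter> setB P1 V)" using closed_setB by blast
  then show ?thesis using \<open>setB P1 V \<subseteq> Bx\<close> by (simp add: Int_absorb1)
qed

lemma cont_expq_A: "continuous_on S (\<lambda>a. expq q P1 a b)"
  unfolding expq_def by (intro continuous_intros c3)

lemma cont_expq_B: "continuous_on S (\<lambda>b. expq q P1 a b)"
  unfolding expq_def by (intro continuous_intros c3)

lemma expq_lin_A:
  "expq q P1 (\<lambda>x1 y yh. \<Sum>i\<in>F. w i * i x1 y yh) b = (\<Sum>i\<in>F. w i * expq q P1 i b)"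
  unfolding expq_def
  by (simp add: sum_distrib_left sum_distrib_right sum.swap[where A=F] mult.assoc mult.left_commute)

lemma expq_lin_B:
  "expq q P1 a (\<lambda>x1 yh x2. \<Sum>i\<in>F. w i * i x1 yh x2) = (\<Sum>i\<in>F. w i * expq q P1 a i)"
  unfolding expq_def
  by (simp add: sum_distrib_left sum_distrib_right sum.swap[where A=F] mult.assoc mult.left_commute)


lemma mix_setA:
  assumes "finite F" "F \<subseteq> setA W V" "\<And>i. i\<in>F \<Longrightarrow> 0 \<le> w i" "sum w F = 1"
  shows "(\<lambda>x1 y yh. \<Sum>i\<in>F. w i * i x1 y yh) \<in> setA W V"
proof -
  have A: "\<And>i. i \<in> F \<Longrightarrow> i \<in> setA W V" using assms(2) by blast
  show ?thesis unfolding setA_eq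
  proof (intro CollectI conjI allI)
    fix x1 y yh show "0 \<le> (\<Sum>i\<in>F. w i * i x1 y yh)"
      using A assms(3) unfolding setA_eq by (intro sum_nonneg mult_nonneg_nonneg) auto
  next
    fix x1
    have "(\<Sum>p\<in>UNIV. \<Sum>i\<in>F. w i * i x1 (fst p) (snd p)) = (\<Sum>i\<in>F. w i * (\<Sum>p\<in>UNIV. i x1 (fst p) (snd p)))"
      by (simp add: sum.swap[where A=UNIV] sum_distrib_left)
    also have "\<dots> = (\<Sum>i\<in>F. w i)" using A unfolding setA_eq by (intro sum.cong) auto
    finally show "(\<Sum>p\<in>UNIV. \<Sum>i\<in>F. w i * i x1 (fst p) (snd p)) = 1" using assms(4) by simp
  next
    fix x1 y
    have "(\<Sum>yh\<in>UNIV. \<Sum>i\<in>F. w i * i x1 y yh) = (\<Sum>i\<in>F. w i * (\<Sum>yh\<in>UNIV. i x1 y yh))"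
      by (simp add: sum.swap[where A=UNIV] sum_distrib_left)
    also have "\<dots> = (\<Sum>i\<in>F. w i * W x1 y)" using A unfolding setA_eq by (intro sum.cong) auto
    finally show "(\<Sum>yh\<in>UNIV. \<Sum>i\<in>F. w i * i x1 y yh) = W x1 y" using assms(4)
      by (simp add: sum_distrib_right[symmetric])
  next
    fix x1 yh
    have "(\<Sum>y\<in>UNIV. \<Sum>i\<in>F. w i * i x1 y yh) = (\<Sum>i\<in>F. w i * (\<Sum>y\<in>UNIV. i x1 y yh))"
      by (simp add: sum.swap[where A=UNIV] sum_distrib_left)
    also have "\<dots> = (\<Sum>i\<in>F. w i * V x1 yh)" using A unfolding setA_eq by (intro sum.cong) auto
    finally show "(\<Sum>y\<in>UNIV. \<Sum>i\<in>F. w i * i x1 y yh) = V x1 yh" using assms(4)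
      by (simp add: sum_distrib_right[symmetric])
  qed
qed

lemma mix_setB:
  assumes "finite F" "F \<subseteq> setB P1 V" "\<And>i. i\<in>F \<Longrightarrow> 0 \<le> w i" "sum w F = 1"
  shows "(\<lambda>x1 yh x2. \<Sum>i\<in>F. w i * i x1 yh x2) \<in> setB P1 V"
proof -
  have B: "\<And>i. i \<in> F \<Longrightarrow> i \<in> setB P1 V" using assms(2) by blast
  show ?thesis unfolding setB_eq
  proof (intro CollectI conjI allI)
    fix x1 yh x2 show "0 \<le> (\<Sum>i\<in>F. w i * i x1 yh x2)"
      using B assms(3) unfolding setB_eq by (intro sum_nonneg mult_nonneg_nonneg) auto
  next
    fix x1 yh
    have "(\<Sum>x2\<in>UNIV. \<Sum>i\<in>F. w i * i x1 yh x2) = (\<Sum>i\<in>F. w i * (\<Sum>x2\<in>UNIV. i x1 yh x2))"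
      by (simp add: sum.swap[where A=UNIV] sum_distrib_left)
    also have "\<dots> = (\<Sum>i\<in>F. w i)" using B unfolding setB_eq by (intro sum.cong) auto
    finally show "(\<Sum>x2\<in>UNIV. \<Sum>i\<in>F. w i * i x1 yh x2) = 1" using assms(4) by simp
  next
    fix yh x
    have "(\<Sum>x1\<in>UNIV. P1 x1 * V x1 yh * (\<Sum>i\<in>F. w i * i x1 yh x))
        = (\<Sum>i\<in>F. w i * (\<Sum>x1\<in>UNIV. P1 x1 * V x1 yh * i x1 yh x))"
      by (simp add: sum.swap[where A=UNIV] sum_distrib_left mult.left_commute)
    also have "\<dots> = (\<Sum>i\<in>F. w i * (P1 x * V x yh))" using B unfolding setB_eq by (intro sum.cong) auto
    finally show "(\<Sum>x1\<in>UNIV. P1 x1 * V x1 yh * (\<Sum>i\<in>F. w i * i x1 yh x)) = P1 x * V x yh"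
      using assms(4) by (simp add: sum_distrib_right[symmetric])
  qed
qed

lemma setA_ne:
  assumes "is_cond_pmf W" "is_cond_pmf V"
  shows "(\<lambda>x y yh. W x y * V x yh) \<in> setA W V"
  unfolding setA_eq
proof (intro CollectI conjI allI)
  have W: "\<And>x y. 0 \<le> W x y" "\<And>x. (\<Sum>y\<in>UNIV. W x y) = 1"
    and V: "\<And>x y. 0 \<le> V x y" "\<And>x. (\<Sum>y\<in>UNIV. V x y) = 1"
    using assms by (auto simp: is_cond_pmf_def is_pmf_def)
  fix x1
  show "\<And>y yh. 0 \<le> W x1 y * V x1 yh" using W V by simp
  have "(\<Sum>y\<in>UNIV. W x1 y) * (\<Sum>yh\<in>UNIV. V x1 yh) = (\<Sum>y\<in>UNIV. \<Sum>yh\<in>UNIV. W x1 y * V x1 yh)"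
    by (simp add: sum_product)
  also have "\<dots> = (\<Sum>p\<in>UNIV \<times> UNIV. W x1 (fst p) * V x1 (snd p))"
    by (subst sum.cartesian_product) (simp add: split_beta)
  also have "\<dots> = (\<Sum>p\<in>UNIV. W x1 (fst p) * V x1 (snd p))"
    by simp
  finally have "(\<Sum>p\<in>UNIV. W x1 (fst p) * V x1 (snd p)) = (\<Sum>y\<in>UNIV. W x1 y) * (\<Sum>yh\<in>UNIV. V x1 yh)" by simp
  then show "(\<Sum>p\<in>UNIV. W x1 (fst p) * V x1 (snd p)) = 1" using W V by simp
  show "\<And>y. (\<Sum>yh\<in>UNIV. W x1 y * V x1 yh) = W x1 y" using V by (simp add: sum_distrib_left[symmetric])
  show "\<And>yh. (\<Sum>y\<in>UNIV. W x1 y * V x1 yh) = V x1 yh" using W by (simp add: sum_distrib_right[symmetric])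
qed

lemma setB_ne: "(\<lambda>x1 yh x2. if x2 = x1 then 1 else 0) \<in> setB P1 V"
  unfolding setB_eq by (auto simp: if_distrib cong: if_cong)


theorem lemma1:
  fixes q :: "'x::finite \<Rightarrow> 'y::finite \<Rightarrow> real"
    and P1 :: "'x \<Rightarrow> real"
    and W V :: "'x \<Rightarrow> 'y \<Rightarrow> real"
  assumes "is_pmf P1" and "is_cond_pmf W" and "is_cond_pmf V"
  shows "(\<forall>a\<in>setA W V. \<exists>b\<in>setB P1 V.
            expq q P1 a b = (INF b'\<in>setB P1 V. expq q P1 a b'))
       \<and> (\<forall>b\<in>setB P1 V. \<exists>a\<in>setA W V.
            expq q P1 a b = (SUP a'\<in>setA W V. expq q P1 a' b))
       \<and> (\<exists>a\<in>setA W V. (INF b\<in>setB P1 V. expq q P1 a b)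
            = (SUP a'\<in>setA W V. INF b\<in>setB P1 V. expq q P1 a' b))
       \<and> (\<exists>b\<in>setB P1 V. (SUP a\<in>setA W V. expq q P1 a b)
            = (INF b'\<in>setB P1 V. SUP a\<in>setA W V. expq q P1 a b'))
       \<and> (SUP a\<in>setA W V. INF b\<in>setB P1 V. expq q P1 a b)
          = (INF b\<in>setB P1 V. SUP a\<in>setA W V. expq q P1 a b)"
proof -
  have h1: "compact (setA W V)" by (rule compact_setA)
  have h2: "setA W V \<noteq> {}" using setA_ne[OF assms(2,3)] by blast
  have h3: "compact (setB P1 V)" by (rule compact_setB)
  have h4: "setB P1 V \<noteq> {}" using setB_ne by blast
  have h5: "\<And>g. g \<in> setB P1 V \<Longrightarrow> continuous_on (setA W V) (\<lambda>a. expq q P1 a g)"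
    by (rule cont_expq_A)
  have h6: "\<And>a. a \<in> setA W V \<Longrightarrow> continuous_on (setB P1 V) (expq q P1 a)"
    using cont_expq_B[of "setB P1 V" q P1] by simp
  have h7: "\<exists>a\<in>setA W V. \<forall>g\<in>setB P1 V. expq q P1 a g = (\<Sum>i\<in>F. w i * expq q P1 i g)"
    if "finite F" "F \<subseteq> setA W V" "\<And>i. i\<in>F \<Longrightarrow> 0 \<le> w i" "sum w F = 1" for F w
    using mix_setA[OF that] expq_lin_A[where F=F and w=w] by blast
  have h8: "\<exists>g\<in>setB P1 V. \<forall>a\<in>setA W V. expq q P1 a g = (\<Sum>i\<in>F. w i * expq q P1 a i)"
    if "finite F" "F \<subseteq> setB P1 V" "\<And>i. i\<in>F \<Longrightarrow> 0 \<le> w i" "sum w F = 1" for F w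
    using mix_setB[OF that] expq_lin_B[where F=F and w=w] by blast
  note M = minimax_abs[where f="expq q P1", OF h1 h2 h3 h4 h5 h6 h7 h8]
  show ?thesis by (rule M)
qed

end
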